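(* Let $S \subseteq \mathbb{R}^r$ be a linear subspace, let $0 \le d \le r$, and let $C(S,d)$ be the associated s-cone. Every nonzero vector $x \in C(S,d)$ is a conformal sum of elementary vectors of $C(S,d)$; that is, there exists a finite set $E \subseteq C(S,d)$ of elementary vectors such that \[ x = \sum_{e \in E} e \quad \text{with } \operatorname{sign}(e) \le \operatorname{sign}(x) \text{ for all } e \in E. \] Moreover, the set $E$ can be chosen such that its elements are linearly independent; in particular, they can be ordered such that every $e \in E$ has a component which is nonzero in $e$ but zero in all its predecessors in the ordering. Then $|E| \le \dim(S)$ and $|E| \le |\operatorname{supp}(x)|$.
   Context: For $x \in \mathbb{R}^n$, $\operatorname{supp}(x) = \{ i \mid x_i \neq 0\}$, and $\operatorname{sign}(x) \in \{-,0,+\}^n$ is obtained by applying the sign function componentwise. The relations $0 < -$ and $0 < +$ induce a partial order on $\{-,0,+\}^n$ (componentwise; $-$ and $+$ are incomparable), and for sign vectors $X \le Y$ means this holds in every component. For a linear subspace $S \subseteq \mathbb{R}^r$ and $0 \le d \le r$, the s-cone is $C(S,d) = \{ (x,y) \in \mathbb{R}^{(r-d)+d} \mid (x,y) \in S,\ y \ge 0\}$ (the last $d$ coordinates are required to be nonnegative). A nonzero vector $e \in C(S,d)$ is called elementary if it is support-minimal: for every nonzero $x' \in C(S,d)$, $\operatorname{supp}(x') \subseteq \operatorname{supp}(e)$ implies $\operatorname{supp}(x') = \operatorname{supp}(e)$. *)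

theory Defs
  imports "HOL-Analysis.Analysis"
begin

text \<open>Vectors of R^r are modelled as real ^ 'n with CARD('n) = r.
  The sign-constrained coordinates (the paper's last d coordinates) form an index set D.\<close>

definition supp :: "real ^ 'n \<Rightarrow> 'n set" where
  "supp x = {i. x $ i \<noteq> 0}"

definition sign_vec :: "real ^ 'n \<Rightarrow> 'n \<Rightarrow> real" where
  "sign_vec x = (\<lambda>i. sgn (x $ i))"

definition sign_le :: "('n \<Rightarrow> real) \<Rightarrow> ('n \<Rightarrow> real) \<Rightarrow> bool" where
  "sign_le X Y \<longleftrightarrow> (\<forall>i. X i = 0 \<or> X i = Y i)"

definition s_cone :: "(real ^ 'n) set \<Rightarrow> 'n set \<Rightarrow> (real ^ 'n) set" where
  "s_cone S D = {x. x \<in> S \<and> (\<forall>i\<in>D. x $ i \<ge> 0)}"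

definition elementary :: "(real ^ 'n) set \<Rightarrow> 'n set \<Rightarrow> real ^ 'n \<Rightarrow> bool" where
  "elementary S D e \<longleftrightarrow> e \<in> s_cone S D \<and> e \<noteq> 0 \<and>
     (\<forall>x'\<in>s_cone S D. x' \<noteq> 0 \<and> supp x' \<subseteq> supp e \<longrightarrow> supp x' = supp e)"

end

theory Submission
  imports Defs
begin

definition conf :: "real^'n \<Rightarrow> real^'n \<Rightarrow> bool" where
  "conf z y \<longleftrightarrow> (\<forall>i. z$i = 0 \<or> z$i * y$i > 0)"

lemma conf_sign: "conf z y \<Longrightarrow> sign_le (sign_vec z) (sign_vec y)"
  unfolding conf_def sign_le_def sign_vec_def
proof (intro allI)
  fix i assume h: "\<forall>i. z $ i = 0 \<or> 0 < z $ i * y $ i"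
  show "sgn (z $ i) = 0 \<or> sgn (z $ i) = sgn (y $ i)"
  proof (cases "z $ i = 0")
    case False
    then have "0 < z $ i * y $ i" using h by blast
    then show ?thesis by (auto simp: zero_less_mult_iff)
  qed simp
qed

lemma conf_trans: "conf a b \<Longrightarrow> conf b c \<Longrightarrow> conf a c"
  unfolding conf_def
proof (intro allI)
  fix i assume a: "\<forall>i. a $ i = 0 \<or> 0 < a $ i * b $ i" and b: "\<forall>i. b $ i = 0 \<or> 0 < b $ i * c $ i"
  show "a $ i = 0 \<or> 0 < a $ i * c $ i"
    using a[rule_format, of i] b[rule_format, of i]
    by (auto simp: zero_less_mult_iff)
qed

lemma conf_supp: "conf z y \<Longrightarrow> supp z \<subseteq> supp y"
  unfolding conf_def supp_def by auto

lemma conf_refl: "conf y y"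
  unfolding conf_def by auto

lemma conf_cone: "conf z y \<Longrightarrow> y \<in> s_cone S D \<Longrightarrow> z \<in> S \<Longrightarrow> z \<in> s_cone S D"
proof -
  assume c: "conf z y" and y: "y \<in> s_cone S D" and z: "z \<in> S"
  have "z $ i \<ge> 0" if "i \<in> D" for i
  proof -
    have "y $ i \<ge> 0" using y that unfolding s_cone_def by auto
    moreover have "z $ i = 0 \<or> 0 < z $ i * y $ i" using c unfolding conf_def by blast
    ultimately show ?thesis by (auto simp: zero_less_mult_iff)
  qed
  then show ?thesis using z unfolding s_cone_def by auto
qed

lemma reduce:
  fixes y w :: "real^'n"
  assumes ex: "\<exists>i. w$i * y$i > 0" and sp: "\<forall>i. w$i \<noteq> 0 \<longrightarrow> y$i \<noteq> 0"
  shows "\<exists>t>0. conf (y - t *\<^sub>R w) y \<and> (\<exists>i. w$i \<noteq> 0 \<and> (y - t *\<^sub>R w)$i = 0)"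
proof -
  define P where "P = {i. w$i * y$i > 0}"
  have fP: "finite P" by simp
  have neP: "P \<noteq> {}" using ex P_def by auto
  define t where "t = Min ((\<lambda>i. y$i / w$i) ` P)"
  have "t \<in> (\<lambda>i. y$i / w$i) ` P"
    using Min_in[of "(\<lambda>i. y$i / w$i) ` P"] fP neP t_def by auto
  then obtain i0 where i0: "i0 \<in> P" "t = y$i0 / w$i0" by auto
  have tle: "\<And>i. i \<in> P \<Longrightarrow> t \<le> y$i / w$i"
    using fP t_def by auto
  have tpos: "t > 0" using i0 P_def
    by (auto simp: zero_less_divide_iff zero_less_mult_iff)
  have w0: "w$i0 \<noteq> 0" using i0 P_def by auto
  have "conf (y - t *\<^sub>R w) y"
    unfolding conf_def
  proof
    fix i
    show "(y - t *\<^sub>R w) $ i = 0 \<or> 0 < (y - t *\<^sub>R w) $ i * y $ i"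
    proof (cases "w$i = 0")
      case True then show ?thesis by (simp add: zero_less_mult_iff) (metis linorder_neqE_linordered_idom)
    next
      case False
      then have yi: "y$i \<noteq> 0" using sp by auto
      show ?thesis
      proof (cases "w$i * y$i > 0")
        case True
        then have "t \<le> y$i / w$i" using tle P_def by auto
        then show ?thesis using True
          by (auto simp: le_divide_eq zero_less_mult_iff mult.commute)
      next
        case False
        then have "w$i * y$i < 0" using yi \<open>w$i \<noteq> 0\<close>
          by (metis linorder_neqE_linordered_idom mult_eq_0_iff)
        then have "0 < y$i * y$i - t * (w$i * y$i)" using tpos yi
          by (smt (verit) mult_pos_neg not_square_less_zero zero_less_mult_iff)
        then show ?thesis by (simp add: algebra_simps)
      qed
    qed
  qed
  moreover have "(y - t *\<^sub>R w)$i0 = 0" using i0 w0 by simp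
  ultimately show ?thesis using tpos w0 by blast
qed

lemma exists_elem:
  assumes S: "subspace S" and x: "x \<in> s_cone S D" "x \<noteq> 0"
  shows "\<exists>e. elementary S D e \<and> conf e x"
proof -
  define Y where "Y = {y. y \<in> S \<and> y \<noteq> 0 \<and> conf y x}"
  have "x \<in> Y" using x conf_refl unfolding Y_def s_cone_def by auto
  then obtain y where yY: "y \<in> Y" and ymin: "\<And>y'. y' \<in> Y \<Longrightarrow> card (supp y) \<le> card (supp y')"
    using ex_has_least_nat[of "\<lambda>y. y \<in> Y" x "\<lambda>y. card (supp y)"] by blast
  have yS: "y \<in> S" and y0: "y \<noteq> 0" and yx: "conf y x" using yY Y_def by auto
  have yC: "y \<in> s_cone S D" using conf_cone[OF yx x(1) yS] .
  have "elementary S D y"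
    unfolding elementary_def
  proof (intro conjI yC y0 ballI impI)
    fix x' assume x'C: "x' \<in> s_cone S D" and h: "x' \<noteq> 0 \<and> supp x' \<subseteq> supp y"
    show "supp x' = supp y"
    proof (rule ccontr)
      assume ne: "supp x' \<noteq> supp y"
      obtain j where j: "j \<in> supp y" "j \<notin> supp x'" using ne h by auto
      obtain i0 where i0: "x'$i0 \<noteq> 0" using h by (metis vec_eq_iff zero_index)
      have yi0: "y$i0 \<noteq> 0" using i0 h unfolding supp_def by auto
      define w where "w = (if x'$i0 * y$i0 > 0 then x' else - x')"
      have wS: "w \<in> S" using x'C S unfolding w_def s_cone_def by (auto simp: subspace_neg)
      have wsupp: "\<And>i. w$i = 0 \<longleftrightarrow> x'$i = 0" unfolding w_def by auto
      have "w$i0 * y$i0 > 0" using i0 yi0 unfolding w_def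
        by (auto simp: zero_less_mult_iff)
      moreover have "\<forall>i. w$i \<noteq> 0 \<longrightarrow> y$i \<noteq> 0" using wsupp h unfolding supp_def by auto
      ultimately obtain t where t: "t > 0" "conf (y - t *\<^sub>R w) y"
        and i1: "\<exists>i. w$i \<noteq> 0 \<and> (y - t *\<^sub>R w)$i = 0"
        using reduce[of w y] by blast
      define z where "z = y - t *\<^sub>R w"
      have zS: "z \<in> S" unfolding z_def using yS wS S by (simp add: subspace_diff subspace_scale)
      have zj: "z$j = y$j" using j wsupp unfolding z_def supp_def by auto
      have z0: "z \<noteq> 0" using zj j unfolding supp_def by auto
      have zx: "conf z x" using conf_trans t(2) yx z_def by blast
      have "z \<in> Y" using zS z0 zx Y_def by auto
      moreover obtain i where i: "w$i \<noteq> 0" "z$i = 0" using i1 z_def by auto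
      have "supp z \<subset> supp y"
        using conf_supp[OF t(2)[folded z_def]] i wsupp h unfolding supp_def by auto
      then have "card (supp z) < card (supp y)" by (simp add: psubset_card_mono)
      ultimately show False using ymin by fastforce
    qed
  qed
  then show ?thesis using yx by blast
qed

lemma main:
  assumes S: "subspace S"
  shows "x \<in> s_cone S D \<Longrightarrow> x \<noteq> 0 \<Longrightarrow> \<exists>es. distinct es \<and> (\<forall>e\<in>set es. elementary S D e \<and> conf e x)
     \<and> x = sum_list es \<and> (\<forall>k<length es. \<exists>i. (es!k)$i \<noteq> 0 \<and> (\<forall>j<k. (es!j)$i = 0))
     \<and> length es \<le> card (supp x) \<and> independent (set es)"
proof (induction "card (supp x)" arbitrary: x rule: less_induct)
  case less
  obtain e where e: "elementary S D e" "conf e x" using exists_elem[OF S less.prems] by blast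
  have eS: "e \<in> S" and eC: "e \<in> s_cone S D" and e0: "e \<noteq> 0" using e unfolding elementary_def s_cone_def by auto
  obtain i where "e$i \<noteq> 0" using e0 by (metis vec_eq_iff zero_index)
  then have "\<exists>i. e$i * x$i > 0" using e(2) unfolding conf_def by blast
  moreover have "\<forall>i. e$i \<noteq> 0 \<longrightarrow> x$i \<noteq> 0" using e(2) unfolding conf_def by auto
  ultimately obtain t where t: "t > 0" "conf (x - t *\<^sub>R e) x"
    and "\<exists>i. e$i \<noteq> 0 \<and> (x - t *\<^sub>R e)$i = 0" using reduce[of e x] by blast
  then obtain i0 where i0: "e$i0 \<noteq> 0" "(x - t *\<^sub>R e)$i0 = 0" by blast
  define z where "z = x - t *\<^sub>R e"
  define e' where "e' = t *\<^sub>R e"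
  have supe': "supp e' = supp e" using t unfolding e'_def supp_def by auto
  have e'C: "e' \<in> s_cone S D" using eC t S unfolding e'_def s_cone_def by (auto simp: subspace_scale)
  have e'el: "elementary S D e'" using e e'C supe' t unfolding elementary_def e'_def by auto
  have e'x: "conf e' x" unfolding conf_def e'_def
  proof
    fix i show "(t *\<^sub>R e) $ i = 0 \<or> 0 < (t *\<^sub>R e) $ i * x $ i"
      using e(2)[unfolded conf_def, rule_format, of i] t by (auto simp: mult.assoc intro: mult_pos_pos)
  qed
  have xz: "x = z + e'" unfolding z_def e'_def by simp
  have e'i0: "e'$i0 \<noteq> 0" using i0 t unfolding e'_def by simp
  have xi0: "x$i0 \<noteq> 0" using e(2) i0 unfolding conf_def by auto
  have zi0: "z$i0 = 0" using i0 z_def by simp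
  have cardx: "card (supp x) \<ge> 1" using xi0
    by (metis One_nat_def Suc_leI card_gt_0_iff empty_iff finite mem_Collect_eq supp_def)
  show ?case
  proof (cases "z = 0")
    case True
    then have "x = e'" using xz by simp
    moreover have "e' \<noteq> 0" using e'i0 by auto
    ultimately show ?thesis using e'el e'x cardx e'i0
      by (intro exI[of _ "[e']"]) (auto simp: independent_insert)
  next
    case False
    have zS: "z \<in> S" unfolding z_def using less.prems eS S
      by (simp add: s_cone_def subspace_diff subspace_scale)
    have zC: "z \<in> s_cone S D" using conf_cone[OF t(2)[folded z_def] less.prems(1) zS] .
    have "supp z \<subset> supp x" using conf_supp[OF t(2)[folded z_def]] zi0 xi0 unfolding supp_def by auto
    then have "card (supp z) < card (supp x)" by (simp add: psubset_card_mono)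
    from less.hyps[OF this zC False] obtain es where es: "distinct es"
      "\<forall>e\<in>set es. elementary S D e \<and> conf e z" "z = sum_list es"
      "\<forall>k<length es. \<exists>i. (es!k)$i \<noteq> 0 \<and> (\<forall>j<k. (es!j)$i = 0)"
      "length es \<le> card (supp z)" "independent (set es)" by blast
    have zero: "\<And>v. v \<in> set es \<Longrightarrow> v$i0 = 0" using es(2) zi0 unfolding conf_def by fastforce
    have nin: "e' \<notin> set es" using zero e'i0 by blast
    have spn: "span (set es) \<subseteq> {v. v $ i0 = 0}"
      by (rule span_minimal) (use zero subspace_special_hyperplane in auto)
    have nspan: "e' \<notin> span (set es)" using spn e'i0 by auto
    have zx: "conf z x" using t(2) z_def by simp
    show ?thesis
    proof (intro exI[of _ "es @ [e']"] conjI)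
      show "distinct (es @ [e'])" using es(1) nin by simp
      show "\<forall>v\<in>set (es @ [e']). elementary S D v \<and> conf v x"
        using es(2) e'el e'x conf_trans zx by auto
      show "x = sum_list (es @ [e'])" using xz es(3) by simp
      show "length (es @ [e']) \<le> card (supp x)" using es(5) \<open>card (supp z) < card (supp x)\<close> by simp
      show "independent (set (es @ [e']))" using es(6) nspan by (simp add: independent_insert)
      show "\<forall>k<length (es @ [e']). \<exists>i. ((es @ [e']) ! k) $ i \<noteq> 0 \<and> (\<forall>j<k. ((es @ [e']) ! j) $ i = 0)"
      proof (intro allI impI)
        fix k assume k: "k < length (es @ [e'])"
        show "\<exists>i. ((es @ [e']) ! k) $ i \<noteq> 0 \<and> (\<forall>j<k. ((es @ [e']) ! j) $ i = 0)"
        proof (cases "k < length es")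
          case True
          then show ?thesis using es(4) by (auto simp: nth_append)
        next
          case False
          then have "k = length es" using k by simp
          then show ?thesis using e'i0 zero by (intro exI[of _ i0]) (auto simp: nth_append)
        qed
      qed
    qed
  qed
qed

theorem theorem1:
  fixes S :: "(real ^ 'n) set" and D :: "'n set" and x :: "real ^ 'n"
  assumes "subspace S"
    and "x \<in> s_cone S D" and "x \<noteq> 0"
  shows "\<exists>E. finite E \<and> E \<subseteq> s_cone S D \<and> (\<forall>e\<in>E. elementary S D e)
           \<and> x = (\<Sum>e\<in>E. e) \<and> (\<forall>e\<in>E. sign_le (sign_vec e) (sign_vec x))
           \<and> independent E
           \<and> (\<exists>es. distinct es \<and> set es = E \<and>
                (\<forall>k<length es. \<exists>i. (es ! k) $ i \<noteq> 0 \<and> (\<forall>j<k. (es ! j) $ i = 0)))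
           \<and> card E \<le> dim S \<and> card E \<le> card (supp x)"
proof -
  obtain es where es: "distinct es" "\<forall>e\<in>set es. elementary S D e \<and> conf e x"
     "x = sum_list es" "\<forall>k<length es. \<exists>i. (es!k)$i \<noteq> 0 \<and> (\<forall>j<k. (es!j)$i = 0)"
     "length es \<le> card (supp x)" "independent (set es)"
    using main[OF assms] by blast
  have sub: "set es \<subseteq> s_cone S D" using es(2) unfolding elementary_def by auto
  have subS: "set es \<subseteq> S" using sub unfolding s_cone_def by auto
  show ?thesis
  proof (intro exI[of _ "set es"] conjI)
    show "x = (\<Sum>e\<in>set es. e)" using es(1,3) by (simp add: distinct_sum_list_conv_Sum)
    show "card (set es) \<le> dim S" using independent_card_le_dim[OF subS es(6)] .
    show "card (set es) \<le> card (supp x)" using es(1,5) by (simp add: distinct_card)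
    show "\<forall>e\<in>set es. sign_le (sign_vec e) (sign_vec x)" using es(2) conf_sign by blast
    show "finite (set es)" by simp
    show "set es \<subseteq> s_cone S D" by (rule sub)
    show "\<forall>e\<in>set es. elementary S D e" using es(2) by blast
    show "independent (set es)" by (rule es(6))
    show "\<exists>es'. distinct es' \<and> set es' = set es \<and>
                (\<forall>k<length es'. \<exists>i. (es' ! k) $ i \<noteq> 0 \<and> (\<forall>j<k. (es' ! j) $ i = 0))"
      using es(1,4) by blast
  qed
qed

end
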